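(* Let $E$ be an end of revolution in $\mathbb{M}^3(\kappa)$ that is isometric to $\mathbb{M}^2_w\setminus B_\rho(o_w)$ for some rotationally symmetric model surface $\mathbb{M}^2_w$ with radius $\Lambda=\infty$ and some $\rho>0$. Then $E$ is parabolic if and only if $\int_\rho^\infty\frac{dt}{w(t)}=\infty$. Moreover, if $\int_\rho^\infty\frac{\int_0^t w(s)\,ds}{w(t)}\,dt=\infty$, then there exist a compact set $K\subset E$ and a $1$-superharmonic function $v$ on $E\setminus K$ (i.e. $-\Delta v+v\ge0$) such that $v(x)\to\infty$ as $x\to\infty$.
   Context: An end of revolution in $\mathbb{M}^3(\kappa)$ is the image of $(t,\theta)\mapsto R_\theta(\beta(t))$, where $\beta:[0,\infty)\to\mathbb{M}^2(\kappa)$ is a smooth regular curve of infinite length in a totally geodesic surface containing a geodesic $\sigma$, not meeting $\sigma$, and $R_\theta$ ranges over the rotations about $\sigma$, with induced metric. A $w$-model space $\mathbb{M}^2_w$ is a simply connected smooth surface with center point $o_w$ such that $\mathbb{M}^2_w\setminus\{o_w\}$ is isometric to $(0,\Lambda)\times\mathbb{S}^1$ with metric $dr^2+w(r)^2d\theta^2$, $w>0$ on $(0,\Lambda)$, $w(0)=0$, $w'(0)=1$, $w^{(2k)}(0)=0$; $B_\rho(o_w)$ is the geodesic ball of radius $\rho$ about $o_w$. An end is parabolic if every bounded harmonic function on it is determined by its boundary values. "$v(x)\to\infty$ as $x\to\infty$" means $v$ tends to infinity as $x$ leaves every compact set. *)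

theory Defs
  imports "HOL-Analysis.Analysis"
begin

definition smooth_fun :: "(real \<Rightarrow> real) \<Rightarrow> bool" where
  "smooth_fun f \<longleftrightarrow> (\<forall>k x. ((deriv ^^ k) f) differentiable (at x))"

text \<open>Warping function of a w-model space with radius Lambda = infinity.\<close>
definition model_profile :: "(real \<Rightarrow> real) \<Rightarrow> bool" where
  "model_profile w \<longleftrightarrow> smooth_fun w \<and> w 0 = 0 \<and> deriv w 0 = 1 \<and>
     (\<forall>k. (deriv ^^ (2 * k)) w 0 = 0) \<and> (\<forall>r>0. w r > 0)"

text \<open>The end M_w minus the open geodesic ball B_rho(o_w), in polar coordinates
  (r, z) with r the distance to o_w and z on the unit circle.\<close>
definition model_end :: "real \<Rightarrow> (real \<times> complex) set" where
  "model_end \<rho> = {(r, z). r \<ge> \<rho> \<and> cmod z = 1}"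

definition pullback :: "(real \<times> complex \<Rightarrow> real) \<Rightarrow> real \<times> real \<Rightarrow> real" where
  "pullback u = (\<lambda>(r, \<theta>). u (r, cis \<theta>))"

definition d_r :: "(real \<times> real \<Rightarrow> real) \<Rightarrow> real \<times> real \<Rightarrow> real" where
  "d_r f = (\<lambda>(r, \<theta>). deriv (\<lambda>s. f (s, \<theta>)) r)"

definition d_th :: "(real \<times> real \<Rightarrow> real) \<Rightarrow> real \<times> real \<Rightarrow> real" where
  "d_th f = (\<lambda>(r, \<theta>). deriv (\<lambda>t. f (r, t)) \<theta>)"

definition C2_on :: "(real \<times> real) set \<Rightarrow> (real \<times> real \<Rightarrow> real) \<Rightarrow> bool" where
  "C2_on S f \<longleftrightarrow> open S \<and>
     (\<forall>p\<in>S. f differentiable (at p)) \<and>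
     (\<forall>p\<in>S. d_r f differentiable (at p)) \<and>
     (\<forall>p\<in>S. d_th f differentiable (at p)) \<and>
     continuous_on S (d_r (d_r f)) \<and> continuous_on S (d_th (d_th f)) \<and>
     continuous_on S (d_r (d_th f)) \<and> continuous_on S (d_th (d_r f))"

text \<open>Laplace-Beltrami operator of dr^2 + w(r)^2 dtheta^2 in polar coordinates.\<close>
definition model_lap :: "(real \<Rightarrow> real) \<Rightarrow> (real \<times> real \<Rightarrow> real) \<Rightarrow> real \<times> real \<Rightarrow> real" where
  "model_lap w f = (\<lambda>(r, \<theta>). d_r (d_r f) (r, \<theta>) + deriv w r / w r * d_r f (r, \<theta>)
                          + d_th (d_th f) (r, \<theta>) / (w r)^2)"

definition harmonic_coords :: "(real \<Rightarrow> real) \<Rightarrow> (real \<times> real) set \<Rightarrow> (real \<times> real \<Rightarrow> real) \<Rightarrow> bool" where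
  "harmonic_coords w U f \<longleftrightarrow> C2_on U f \<and> (\<forall>p\<in>U. model_lap w f p = 0)"

text \<open>Parabolicity: every bounded harmonic function (continuous up to the boundary
  r = rho, harmonic in the interior) is determined by its boundary values.\<close>
definition parabolic_model_end :: "(real \<Rightarrow> real) \<Rightarrow> real \<Rightarrow> bool" where
  "parabolic_model_end w \<rho> \<longleftrightarrow>
     (\<forall>u1 u2. bounded (u1 ` model_end \<rho>) \<and> bounded (u2 ` model_end \<rho>) \<and>
        continuous_on (model_end \<rho>) u1 \<and> continuous_on (model_end \<rho>) u2 \<and>
        harmonic_coords w {(r, \<theta>). r > \<rho>} (pullback u1) \<and>
        harmonic_coords w {(r, \<theta>). r > \<rho>} (pullback u2) \<and>
        (\<forall>z. cmod z = 1 \<longrightarrow> u1 (\<rho>, z) = u2 (\<rho>, z))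
        \<longrightarrow> (\<forall>x\<in>model_end \<rho>. u1 x = u2 x))"

definition one_superharmonic_off :: "(real \<Rightarrow> real) \<Rightarrow> real \<Rightarrow> (real \<times> complex) set
     \<Rightarrow> (real \<times> complex \<Rightarrow> real) \<Rightarrow> bool" where
  "one_superharmonic_off w \<rho> K v \<longleftrightarrow>
     continuous_on (model_end \<rho> - K) v \<and>
     C2_on {(r, \<theta>). r > \<rho> \<and> (r, cis \<theta>) \<notin> K} (pullback v) \<and>
     (\<forall>p\<in>{(r, \<theta>). r > \<rho> \<and> (r, cis \<theta>) \<notin> K}.
        - model_lap w (pullback v) p + pullback v p \<ge> 0)"

definition tends_to_infinity_on :: "('a::topological_space) set \<Rightarrow> ('a \<Rightarrow> real) \<Rightarrow> bool" where
  "tends_to_infinity_on A v \<longleftrightarrow> (\<forall>M. \<exists>C. compact C \<and> (\<forall>x\<in>A - C. v x \<ge> M))"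

end

theory Submission
  imports Defs
begin


lemma second_deriv_max:
  fixes f f' :: "real \<Rightarrow> real"
  assumes ax: "a < x" and xb: "x < b" and mx: "\<And>y. a<y \<Longrightarrow> y<b \<Longrightarrow> f y \<le> f x"
    and df: "\<And>y. a<y \<Longrightarrow> y<b \<Longrightarrow> (f has_real_derivative f' y) (at y)"
    and d2: "(f' has_real_derivative L) (at x)"
  shows "f' x = 0 \<and> L \<le> 0"
proof -
  have f'0: "f' x = 0"
  proof (rule DERIV_local_max[OF df[OF ax xb], of "min (x-a) (b-x)"])
    show "0 < min (x-a) (b-x)" using ax xb by auto
    show "\<forall>y. \<bar>x - y\<bar> < min (x - a) (b - x) \<longrightarrow> f y \<le> f x"
      using mx by (auto simp: abs_if split: if_splits)
  qed
  moreover have "L \<le> 0"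
  proof (rule ccontr)
    assume "\<not> L \<le> 0" then have "0 < L" by simp
    from DERIV_pos_inc_right[OF d2 this] obtain d where d: "d>0" "\<And>h. h>0 \<Longrightarrow> h<d \<Longrightarrow> f' x < f' (x+h)"
      by auto
    define h0 where "h0 = min (d/2) ((b-x)/2)"
    have h0: "h0 > 0" "h0 < d" "x + h0 < b" using d(1) xb unfolding h0_def by (auto simp: min_def field_simps)
    have "f x < f (x+h0)"
    proof (rule DERIV_pos_imp_increasing_open[of x "x+h0" f])
      show "x < x + h0" using h0 by simp
      show "\<exists>y. DERIV f t :> y \<and> 0 < y" if "x < t" "t < x + h0" for t
      proof -
        have "f' x < f' (x + (t - x))" using d(2)[of "t-x"] that h0 by auto
        then show ?thesis using df[of t] that ax h0 f'0 by auto
      qed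
      show "continuous_on {x..x + h0} f"
        by (rule DERIV_continuous_on[where D=f']) (use df ax h0 in \<open>auto intro: has_field_derivative_at_within\<close>)
    qed
    with mx[of "x+h0"] h0 ax show False by auto
  qed
  ultimately show ?thesis by simp
qed

lemma mp_w_deriv:
  assumes "model_profile w"
  shows "(w has_real_derivative deriv w x) (at x)"
    and "(deriv w has_real_derivative deriv (deriv w) x) (at x)"
    and "r > 0 \<Longrightarrow> w r > 0" and "r \<ge> 0 \<Longrightarrow> w r \<ge> 0"
    and "continuous_on A w" and "continuous_on A (deriv w)"
proof -
  have sm: "\<And>k x. ((deriv ^^ k) w) differentiable (at x)" and p: "\<forall>r>0. w r > 0" and w0: "w 0 = 0"
    using assms unfolding model_profile_def smooth_fun_def by auto
  have a: "\<And>x. (w has_real_derivative deriv w x) (at x)"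
    using sm[of 0] DERIV_deriv_iff_real_differentiable by fastforce
  have b: "\<And>x. (deriv w has_real_derivative deriv (deriv w) x) (at x)"
    using sm[of 1] DERIV_deriv_iff_real_differentiable by fastforce
  show "(w has_real_derivative deriv w x) (at x)" by (rule a)
  show "(deriv w has_real_derivative deriv (deriv w) x) (at x)" by (rule b)
  show "r > 0 \<Longrightarrow> w r > 0" using p by auto
  show "r \<ge> 0 \<Longrightarrow> w r \<ge> 0" using p w0 by (cases "r = 0") (auto simp: less_eq_real_def)
  show "continuous_on A w"
    by (rule continuous_at_imp_continuous_on) (use a DERIV_isCont in blast)
  show "continuous_on A (deriv w)"
    by (rule continuous_at_imp_continuous_on) (use b DERIV_isCont in blast)
qed

lemma int_deriv:
  assumes "continuous_on {c..} h" "r > c"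
  shows "((\<lambda>x. integral {c..x} h) has_real_derivative h r) (at r)"
proof -
  have "((\<lambda>x. integral {c..x} h) has_real_derivative h r) (at r within {c..r+1})"
    by (rule integral_has_real_derivative) (use assms in \<open>auto intro: continuous_on_subset\<close>)
  moreover have "at r within {c..r+1} = at r"
    by (rule at_within_interior) (use assms in auto)
  ultimately show ?thesis by simp
qed

lemma int_cont_Icc:
  fixes h :: "real \<Rightarrow> real"
  assumes "continuous_on {c..} h"
  shows "continuous_on {c..R} (\<lambda>x. integral {c..x} h)"
  by (rule indefinite_integral_continuous_1, rule integrable_continuous_real)
     (use assms in \<open>auto intro: continuous_on_subset\<close>)

lemma int_cont:
  fixes h :: "real \<Rightarrow> real"
  assumes "continuous_on {c..} h"
  shows "continuous_on {c..} (\<lambda>x. integral {c..x} h)"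
  unfolding continuous_on_eq_continuous_within
proof
  fix x assume x: "x \<in> {c..}"
  have "continuous (at x within {c..x+1}) (\<lambda>x. integral {c..x} h)"
    using int_cont_Icc[OF assms, of "x+1"] x by (simp add: continuous_on_eq_continuous_within)
  moreover have "at x within {c..} = at x within {c..x+1}"
    by (rule at_within_nhd[where S="{..<x+1}"]) auto
  ultimately show "continuous (at x within {c..}) (\<lambda>x. integral {c..x} h)"
    by (simp add: continuous_within)
qed

lemma int_nonneg:
  fixes h :: "real \<Rightarrow> real"
  assumes "continuous_on {c..} h" "\<And>x. x \<ge> c \<Longrightarrow> h x \<ge> 0"
  shows "integral {c..R} h \<ge> 0"
  by (rule integral_nonneg, rule integrable_continuous_real)
     (use assms in \<open>auto intro: continuous_on_subset\<close>)

lemma int_mono: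
  fixes h :: "real \<Rightarrow> real"
  assumes "continuous_on {c..} h" "\<And>x. x \<ge> c \<Longrightarrow> h x \<ge> 0" "R \<le> R'"
  shows "integral {c..R} h \<le> integral {c..R'} h"
  by (rule integral_subset_le) 
     (use assms in \<open>auto intro!: integrable_continuous_real intro: continuous_on_subset\<close>)



lemma nn_as_sup:
  fixes h :: "real \<Rightarrow> real"
  assumes cont: "continuous_on {c..} h" and nn: "\<And>x. x \<ge> c \<Longrightarrow> h x \<ge> 0"
  shows "(\<integral>\<^sup>+ t. ennreal (indicator {c..} t * h t) \<partial>lborel) = (SUP n::nat. ennreal (integral {c..c+real n} h))"
proof -
  define f where "f n t = ennreal (indicator {c..c+real n} t * h t)" for n :: nat and t
  have inc: "incseq f"
  proof (rule incseq_SucI, rule le_funI)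
    fix n t
    show "f n t \<le> f (Suc n) t"
      unfolding f_def using nn[of t] by (auto intro!: ennreal_leI simp: indicator_def)
  qed
  have meas: "f n \<in> borel_measurable lborel" for n
  proof -
    have "(\<lambda>x. indicator {c..c+real n} x *\<^sub>R h x) \<in> borel_measurable borel"
      by (rule borel_measurable_continuous_on_indicator) (use cont in \<open>auto intro: continuous_on_subset\<close>)
    then show ?thesis unfolding f_def by (simp add: measurable_lborel1)
  qed
  have pw: "(SUP n. f n t) = ennreal (indicator {c..} t * h t)" for t
  proof (cases "t \<ge> c")
    case False then show ?thesis by (simp add: f_def indicator_def)
  next
    case True
    show ?thesis
    proof (rule antisym)
      show "(SUP n. f n t) \<le> ennreal (indicator {c..} t * h t)"
        by (rule SUP_least) (use True nn[of t] in \<open>auto simp: f_def indicator_def intro!: ennreal_leI\<close>)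
      have "f (nat \<lceil>t - c\<rceil>) t = ennreal (indicator {c..} t * h t)"
        using True by (simp add: f_def indicator_def) linarith
      then show "ennreal (indicator {c..} t * h t) \<le> (SUP n. f n t)"
        by (metis UNIV_I SUP_upper)
    qed
  qed
  have eachint: "integral\<^sup>N lborel (f n) = ennreal (integral {c..c+real n} h)" for n
  proof -
    have "integral\<^sup>N lborel (\<lambda>x. indicator {c..c+real n} x * h x) = integral {c..c+real n} h"
      by (rule nn_integral_has_integral_lebesgue) 
         (use nn cont in \<open>auto intro!: integrable_integral integrable_continuous_real intro: continuous_on_subset\<close>)
    then show ?thesis by (simp add: f_def[abs_def])
  qed
  have "(\<integral>\<^sup>+ t. ennreal (indicator {c..} t * h t) \<partial>lborel) = (\<integral>\<^sup>+ t. (SUP n. f n t) \<partial>lborel)"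
    by (simp add: pw)
  also have "\<dots> = (SUP n. integral\<^sup>N lborel (f n))"
    by (rule nn_integral_monotone_convergence_SUP[OF inc meas])
  finally show ?thesis by (simp add: eachint)
qed

lemma nn_div:
  fixes h :: "real \<Rightarrow> real"
  assumes cont: "continuous_on {c..} h" and nn: "\<And>x. x \<ge> c \<Longrightarrow> h x \<ge> 0"
  shows "(\<integral>\<^sup>+ t. ennreal (indicator {c..} t * h t) \<partial>lborel) = \<infinity> \<longleftrightarrow> (\<forall>M. \<exists>R. M < integral {c..R} h)"
proof -
  have mono: "integral {c..R} h \<le> integral {c..R'} h" if "R \<le> R'" for R R'
    using int_mono[OF cont nn that] by blast
  have eq: "(\<integral>\<^sup>+ t. ennreal (indicator {c..} t * h t) \<partial>lborel) = (SUP n::nat. ennreal (integral {c..c+real n} h))"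
    by (rule nn_as_sup[OF cont nn])
  show ?thesis
  proof (rule iffI)
    assume inf0: "(\<integral>\<^sup>+ t. ennreal (indicator {c..} t * h t) \<partial>lborel) = \<infinity>"
    have inf: "(SUP n::nat. ennreal (integral {c..c+real n} h)) = \<infinity>" using inf0 eq by simp
    show "\<forall>M. \<exists>R. M < integral {c..R} h"
    proof
      fix M
      have "\<forall>x<top. \<exists>i\<in>UNIV. x < ennreal (integral {c..c+real i} h)"
        using inf by (simp only: SUP_eq_top_iff[symmetric] infinity_ennreal_def)
      then obtain n where "ennreal (max M 0) < ennreal (integral {c..c+real n} h)"
        by (metis ennreal_less_top)
      then have "max M 0 < integral {c..c+real n} h"
        by (subst (asm) ennreal_less_iff) auto
      then show "\<exists>R. M < integral {c..R} h" by auto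
    qed
  next
    assume unb: "\<forall>M. \<exists>R. M < integral {c..R} h"
    have "(SUP n::nat. ennreal (integral {c..c+real n} h)) = \<infinity>"
      unfolding SUP_eq_top_iff infinity_ennreal_def
    proof (intro allI impI)
      fix x :: ennreal assume "x < top"
      then obtain M where M: "x = ennreal M" "M \<ge> 0" by (cases x) auto
      obtain R where R: "M < integral {c..R} h" using unb by blast
      have "integral {c..R} h \<le> integral {c..c + real (nat \<lceil>R - c\<rceil>)} h"
        by (rule mono) linarith
      then have "x < ennreal (integral {c..c + real (nat \<lceil>R - c\<rceil>)} h)"
        using M R by (simp add: ennreal_lessI)
      then show "\<exists>i\<in>UNIV. x < ennreal (integral {c..c+real i} h)" by blast
    qed
    then show "(\<integral>\<^sup>+ t. ennreal (indicator {c..} t * h t) \<partial>lborel) = \<infinity>" using eq by simp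
  qed
qed



lemma diff_fst:
  assumes "(g has_real_derivative D) (at (fst p))"
  shows "(\<lambda>p. g (fst p)) differentiable (at p)"
proof -
  have "(g has_derivative (*) D) (at (fst p))"
    using assms has_field_derivative_imp_has_derivative by blast
  then have "((g \<circ> fst) has_derivative ((*) D \<circ> fst)) (at p)"
    by (intro diff_chain_at has_derivative_fst has_derivative_ident)
  then show ?thesis unfolding differentiable_def o_def by blast
qed

lemma deriv_const0: "deriv (\<lambda>t. k) x = (0::real)"
  by (rule DERIV_imp_deriv) simp

lemma d_th_fst: "d_th (\<lambda>p. g (fst p)) = (\<lambda>p. 0)"
  by (rule ext) (auto simp: d_th_def deriv_const0)

lemma d_r_fst: "d_r (\<lambda>p. g (fst p)) = (\<lambda>p. deriv g (fst p))"
  by (rule ext) (auto simp: d_r_def)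

lemma d_r_zero: "d_r (\<lambda>p. 0) = (\<lambda>p. 0)"
  by (rule ext) (auto simp: d_r_def deriv_const0)

lemma d_th_zero: "d_th (\<lambda>p. 0) = (\<lambda>p. 0)"
  by (rule ext) (auto simp: d_th_def deriv_const0)

lemma S_open: "open {(r, \<theta>::real). r > (\<rho>::real)}"
proof -
  have "{(r, \<theta>::real). r > \<rho>} = {\<rho><..} \<times> UNIV" by auto
  then show ?thesis by (simp add: open_Times)
qed

locale radial =
  fixes w :: "real \<Rightarrow> real" and \<rho> :: real and \<phi> \<phi>' :: "real \<Rightarrow> real" and cst :: real
  assumes mp: "model_profile w" and rpos: "\<rho> > 0"
    and phid: "\<And>s. s > \<rho> \<Longrightarrow> (\<phi> has_real_derivative \<phi>' s) (at s)"
    and phic: "continuous_on {\<rho>..} \<phi>" and phic': "continuous_on {\<rho><..} \<phi>'"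
begin

definition q where "q s = \<phi> s / w s"
definition q2 where "q2 s = (\<phi>' s * w s - \<phi> s * deriv w s) / (w s)^2"
definition H where "H r = cst + integral {\<rho>..r} q"

lemma wpos: "s \<ge> \<rho> \<Longrightarrow> w s > 0"
  using mp_w_deriv(3)[OF mp, of s] rpos by auto

lemma qc: "continuous_on {\<rho>..} q"
  unfolding q_def
  by (intro continuous_intros phic mp_w_deriv(5)[OF mp]) (use wpos in force)

lemma Hd: "r > \<rho> \<Longrightarrow> (H has_real_derivative q r) (at r)"
  unfolding H_def using int_deriv[OF qc] by (auto intro!: derivative_eq_intros)

lemma qd: "r > \<rho> \<Longrightarrow> (q has_real_derivative q2 r) (at r)"
  unfolding q_def q2_def
  using wpos[of r]
  by (auto intro!: derivative_eq_intros phid mp_w_deriv(1)[OF mp] simp: power2_eq_square)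

lemma derivH: "r > \<rho> \<Longrightarrow> deriv H r = q r"
  using Hd DERIV_imp_deriv by blast

lemma derivHd: "r > \<rho> \<Longrightarrow> (deriv H has_real_derivative q2 r) (at r)"
  by (rule has_field_derivative_transform_within_open[OF qd, of r "{\<rho><..}"]) (auto simp: derivH)

lemma deriv2H: "r > \<rho> \<Longrightarrow> deriv (deriv H) r = q2 r"
  using derivHd DERIV_imp_deriv by blast

lemma w2: "s > \<rho> \<Longrightarrow> (w s)^2 \<noteq> 0"
  using wpos[of s] by auto

lemma q2c: "continuous_on {\<rho><..} q2"
  unfolding q2_def
  by (intro continuous_intros phic' mp_w_deriv(5,6)[OF mp] continuous_on_subset[OF phic])
     (auto simp: w2 dest: wpos[OF less_imp_le])

lemma Hc: "continuous_on {\<rho>..} H"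
  unfolding H_def by (intro continuous_intros int_cont qc)

lemma C2: "C2_on {(r, \<theta>). r > \<rho>} (\<lambda>p. H (fst p))"
proof -
  have a: "(\<lambda>p. H (fst p)) differentiable (at p)" "(\<lambda>p. deriv H (fst p)) differentiable (at p)"
    if "p \<in> {(r, \<theta>). r > \<rho>}" for p
    using that Hd derivHd diff_fst[of H "q (fst p)" p] diff_fst[of "deriv H" "q2 (fst p)" p] by auto
  have b: "continuous_on {(r, \<theta>). \<rho> < r} (\<lambda>p. deriv (deriv H) (fst p))"
  proof (rule continuous_on_compose2[of "{\<rho><..}" "deriv (deriv H)" _ fst])
    show "continuous_on {\<rho><..} (deriv (deriv H))"
      by (rule continuous_on_eq[OF q2c]) (auto simp: deriv2H)
  qed (auto intro: continuous_intros)
  show ?thesis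
    unfolding C2_on_def d_r_fst d_th_fst d_r_zero d_th_zero
    using a b S_open by auto
qed

lemma ident: "r > \<rho> \<Longrightarrow> q2 r + deriv w r / w r * q r = \<phi>' r / w r"
  using wpos[of r] by (simp add: q_def q2_def field_simps power2_eq_square)

lemma H0: "H \<rho> = cst" by (simp add: H_def)

lemma lap: "r > \<rho> \<Longrightarrow> model_lap w (\<lambda>p. H (fst p)) (r, \<theta>) = \<phi>' r / w r"
  unfolding model_lap_def d_r_fst d_th_fst d_th_zero
  using wpos[of r] by (simp add: deriv2H derivH q_def q2_def field_simps power2_eq_square)

end



lemma partial_r:
  assumes "f differentiable (at (s,\<theta>))"
  shows "((\<lambda>x. f (x,\<theta>)) has_real_derivative d_r f (s,\<theta>)) (at s)"
proof -
  have "(\<lambda>x. (x,\<theta>)) differentiable (at s)" by (intro derivative_intros)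
  then have "(f \<circ> (\<lambda>x. (x,\<theta>))) differentiable (at s)"
    using assms by (intro differentiable_chain_at) auto
  then show ?thesis unfolding d_r_def o_def
    using DERIV_deriv_iff_real_differentiable by fastforce
qed

lemma partial_th:
  assumes "f differentiable (at (s,\<theta>))"
  shows "((\<lambda>t. f (s,t)) has_real_derivative d_th f (s,\<theta>)) (at \<theta>)"
proof -
  have "(\<lambda>t. (s,t)) differentiable (at \<theta>)" by (intro derivative_intros)
  then have "(f \<circ> (\<lambda>t. (s,t))) differentiable (at \<theta>)"
    using assms by (intro differentiable_chain_at) auto
  then show ?thesis unfolding d_th_def o_def
    using DERIV_deriv_iff_real_differentiable by fastforce
qed

lemma cis_reduce: "\<exists>t\<in>{0..2*pi}. cis t = cis \<theta>"
proof -
  define x where "x = \<theta> / (2*pi)"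
  define t where "t = 2*pi*(x - of_int \<lfloor>x\<rfloor>)"
  have "0 \<le> x - of_int \<lfloor>x\<rfloor>" "x - of_int \<lfloor>x\<rfloor> \<le> 1" by linarith+
  then have t: "t \<in> {0..2*pi}" unfolding t_def by (auto simp: mult_le_cancel_left1)
  have "\<theta> = t + 2*pi * of_int \<lfloor>x\<rfloor>" unfolding t_def x_def by (simp add: field_simps)
  then have "cis \<theta> = cis t * cis (2*pi * of_int \<lfloor>x\<rfloor>)" by (simp only: cis_mult)
  also have "cis (2*pi * of_int \<lfloor>x\<rfloor>) = 1" by (rule cis_multiple_2pi) simp
  finally show ?thesis using t by auto
qed

lemma pullback_reduce: "\<exists>t\<in>{0..2*pi}. pullback u (r,t) = pullback u (r,\<theta>)"
proof -
  obtain t where "t\<in>{0..2*pi}" "cis t = cis \<theta>" using cis_reduce by blast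
  then show ?thesis by (auto simp: pullback_def intro!: bexI[of _ t])
qed

lemma pullback_cont:
  assumes "continuous_on (model_end \<rho>) u"
  shows "continuous_on {(r,\<theta>). r \<ge> \<rho>} (pullback u)"
proof -
  have e: "pullback u = (\<lambda>p. u (fst p, cis (snd p)))" by (auto simp: pullback_def)
  show ?thesis unfolding e
    by (rule continuous_on_compose2[OF assms]) (auto intro!: continuous_intros simp: model_end_def)
qed

lemma pullback_bound:
  assumes "bounded (u ` model_end \<rho>)"
  obtains B where "\<And>r \<theta>. r \<ge> \<rho> \<Longrightarrow> \<bar>pullback u (r,\<theta>)\<bar> \<le> B"
proof -
  obtain B where "\<forall>x\<in>u ` model_end \<rho>. norm x \<le> B" using assms bounded_iff by metis
  then have "\<bar>pullback u (r,\<theta>)\<bar> \<le> B" if "r \<ge> \<rho>" for r \<theta>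
    using that by (auto simp: pullback_def model_end_def)
  then show ?thesis using that by blast
qed



lemma max_principle:
  fixes w :: "real \<Rightarrow> real" and \<rho> :: real
  assumes mp: "model_profile w" and rpos: "\<rho> > 0"
    and divF: "\<forall>M. \<exists>R. M < integral {\<rho>..R} (\<lambda>s. 1 / w s)"
    and b1: "bounded (u1 ` model_end \<rho>)" and b2: "bounded (u2 ` model_end \<rho>)"
    and c1: "continuous_on (model_end \<rho>) u1" and c2: "continuous_on (model_end \<rho>) u2"
    and h1: "harmonic_coords w {(r, \<theta>). r > \<rho>} (pullback u1)"
    and h2: "harmonic_coords w {(r, \<theta>). r > \<rho>} (pullback u2)"
    and bd: "\<And>z. cmod z = 1 \<Longrightarrow> u1 (\<rho>, z) = u2 (\<rho>, z)"
    and r0: "r0 > \<rho>"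
  shows "pullback u1 (r0,\<theta>0) \<le> pullback u2 (r0,\<theta>0)"
proof (rule ccontr)
  define U1 where "U1 = pullback u1"
  define U2 where "U2 = pullback u2"
  assume "\<not> ?thesis"
  then have eta: "U1 (r0,\<theta>0) - U2 (r0,\<theta>0) > 0" by (simp add: U1_def U2_def)
  define \<eta> where "\<eta> = U1 (r0,\<theta>0) - U2 (r0,\<theta>0)"
  interpret F: radial w \<rho> "\<lambda>_. 1" "\<lambda>_. 0" 0
    by unfold_locales (auto intro: mp rpos)
  interpret G: radial w \<rho> "\<lambda>s. s - \<rho>" "\<lambda>_. 1" 0
    by unfold_locales (auto intro!: mp rpos derivative_eq_intros continuous_intros)
  have Fq: "F.q = (\<lambda>s. 1 / w s)" by (auto simp: F.q_def)
  have Fnn: "F.H r \<ge> 0" for r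
    unfolding F.H_def using int_nonneg[OF F.qc] F.wpos by (auto simp: F.q_def less_imp_le)
  have Gnn: "G.H r \<ge> 0" for r
    unfolding G.H_def using int_nonneg[OF G.qc] G.wpos by (auto simp: G.q_def less_imp_le)
  have Fmono: "F.H r \<le> F.H r'" if "r \<le> r'" for r r'
    unfolding F.H_def using int_mono[OF F.qc _ that] F.wpos by (auto simp: F.q_def less_imp_le)
  obtain B1 where B1: "\<And>r \<theta>. r \<ge> \<rho> \<Longrightarrow> \<bar>U1 (r,\<theta>)\<bar> \<le> B1"
    using pullback_bound[OF b1] U1_def by metis
  obtain B2 where B2: "\<And>r \<theta>. r \<ge> \<rho> \<Longrightarrow> \<bar>U2 (r,\<theta>)\<bar> \<le> B2"
    using pullback_bound[OF b2] U2_def by metis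
  define \<epsilon> where "\<epsilon> = \<eta> / (2 * (F.H r0 + 1))"
  have eps: "\<epsilon> > 0" "\<epsilon> * F.H r0 < \<eta> / 2"
    using eta Fnn[of r0] by (auto simp: \<epsilon>_def \<eta>_def field_simps)
  obtain R1 where R1: "(B1 + B2 + 1) / \<epsilon> < F.H R1"
    using divF unfolding F.H_def Fq by auto
  define R where "R = max R1 (r0 + 1)"
  have R: "R > r0" "(B1 + B2 + 1) / \<epsilon> < F.H R"
    using R1 Fmono[of R1 R] by (auto simp: R_def)
  then have epsR: "\<epsilon> * F.H R > B1 + B2 + 1" using eps by (simp add: field_simps)
  define \<delta> where "\<delta> = 1 / (G.H R + 1)"
  have del: "\<delta> > 0" "\<delta> * G.H R < 1"
    using Gnn[of R] by (auto simp: \<delta>_def field_simps)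
  define V where "V p = U1 p - U2 p - \<epsilon> * F.H (fst p) + \<delta> * G.H (fst p)" for p
  define K where "K = {\<rho>..R} \<times> {0..2*pi}"
  have Vc: "continuous_on K V"
  proof -
    have "continuous_on K U1" "continuous_on K U2"
      using pullback_cont[OF c1] pullback_cont[OF c2] unfolding U1_def U2_def K_def
      by (auto elim!: continuous_on_subset)
    moreover have "continuous_on K (\<lambda>p. F.H (fst p))" "continuous_on K (\<lambda>p. G.H (fst p))"
      by (auto intro!: continuous_on_compose2[OF F.Hc] continuous_on_compose2[OF G.Hc]
          continuous_intros simp: K_def)
    ultimately show ?thesis unfolding V_def by (intro continuous_intros)
  qed
  have Kc: "compact K" unfolding K_def by (intro compact_Times compact_Icc)
  have Kne: "K \<noteq> {}" using r0 R unfolding K_def by auto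
  obtain p1 where p1: "p1 \<in> K" "\<And>y. y \<in> K \<Longrightarrow> V y \<le> V p1"
    using continuous_attains_sup[OF Kc Kne Vc] by blast
  obtain r1 \<theta>1 where p1e: "p1 = (r1, \<theta>1)" by (cases p1)
  have Vper: "\<exists>t\<in>{0..2*pi}. V (r,t) = V (r,\<theta>)" for r \<theta>
  proof -
    obtain t where t: "t\<in>{0..2*pi}" "cis t = cis \<theta>" using cis_reduce by blast
    then show ?thesis by (auto simp: V_def U1_def U2_def pullback_def intro!: bexI[of _ t])
  qed
  have Vmax: "V (r,\<theta>) \<le> V p1" if "\<rho> \<le> r" "r \<le> R" for r \<theta>
  proof -
    obtain t where "t\<in>{0..2*pi}" "V (r,t) = V (r,\<theta>)" using Vper by blast
    then show ?thesis using p1(2)[of "(r,t)"] that by (auto simp: K_def)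
  qed
  have Vr0: "V (r0,\<theta>0) > 0"
  proof -
    have "V (r0,\<theta>0) \<ge> \<eta> - \<epsilon> * F.H r0" 
      unfolding V_def \<eta>_def using Gnn[of r0] del by simp
    then show ?thesis using eps eta \<eta>_def by linarith
  qed
  have Vp1: "V p1 > 0" using Vmax[of r0 \<theta>0] Vr0 r0 R by linarith
  have Vrho: "V (\<rho>, \<theta>) = 0" for \<theta>
    using bd[of "cis \<theta>"] by (simp add: V_def U1_def U2_def pullback_def F.H0 G.H0)
  have VR: "V (R, \<theta>) < 0" for \<theta>
  proof -
    have "U1 (R,\<theta>) - U2 (R,\<theta>) \<le> B1 + B2" using B1[of R \<theta>] B2[of R \<theta>] r0 R by auto
    then show ?thesis unfolding V_def using epsR del by simp
  qed
  have r1: "\<rho> < r1" "r1 < R"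
  proof -
    have "\<rho> \<le> r1" "r1 \<le> R" using p1(1) p1e K_def by auto
    moreover have "r1 \<noteq> \<rho>" using Vp1 Vrho p1e by force
    moreover have "r1 \<noteq> R" using Vp1 VR[of \<theta>1] p1e by force
    ultimately show "\<rho> < r1" "r1 < R" by auto
  qed
  note C1 = h1[unfolded harmonic_coords_def C2_on_def, folded U1_def]
  note C2' = h2[unfolded harmonic_coords_def C2_on_def, folded U2_def]
  have inS: "(s, t) \<in> {(r, \<theta>). r > \<rho>}" if "s > \<rho>" for s t using that by auto
  define a' where "a' s = d_r U1 (s,\<theta>1) - d_r U2 (s,\<theta>1) - \<epsilon> * F.q s + \<delta> * G.q s" for s
  define L where "L = d_r (d_r U1) (r1,\<theta>1) - d_r (d_r U2) (r1,\<theta>1) - \<epsilon> * F.q2 r1 + \<delta> * G.q2 r1"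
  have ra: "a' r1 = 0 \<and> L \<le> 0"
  proof (rule second_deriv_max[of \<rho> r1 R "\<lambda>s. V (s,\<theta>1)"])
    show "\<rho> < r1" "r1 < R" by (rule r1)+
    show "V (y,\<theta>1) \<le> V (r1,\<theta>1)" if "\<rho> < y" "y < R" for y
      using Vmax[of y \<theta>1] that p1e by auto
    show "((\<lambda>s. V (s,\<theta>1)) has_real_derivative a' y) (at y)" if "\<rho> < y" "y < R" for y
      unfolding V_def a'_def fst_conv
      using partial_r[of U1 y \<theta>1] partial_r[of U2 y \<theta>1] C1 C2' inS[OF that(1)] that
        F.Hd[of y] G.Hd[of y]
      by (auto intro!: derivative_eq_intros)
    show "(a' has_real_derivative L) (at r1)"
      unfolding a'_def L_def
      using partial_r[of "d_r U1" r1 \<theta>1] partial_r[of "d_r U2" r1 \<theta>1] C1 C2' inS[OF r1(1)] r1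
        F.qd[of r1] G.qd[of r1]
      by (auto intro!: derivative_eq_intros)
  qed
  define b' where "b' t = d_th U1 (r1,t) - d_th U2 (r1,t)" for t
  define L2 where "L2 = d_th (d_th U1) (r1,\<theta>1) - d_th (d_th U2) (r1,\<theta>1)"
  have tb: "b' \<theta>1 = 0 \<and> L2 \<le> 0"
  proof (rule second_deriv_max[of "\<theta>1 - 1" \<theta>1 "\<theta>1 + 1" "\<lambda>t. V (r1,t)"])
    show "\<theta>1 - 1 < \<theta>1" "\<theta>1 < \<theta>1 + 1" by simp_all
    show "V (r1,y) \<le> V (r1,\<theta>1)" for y
      using Vmax[of r1 y] r1 p1e by auto
    show "((\<lambda>t. V (r1,t)) has_real_derivative b' y) (at y)" for y
      unfolding V_def b'_def fst_conv
      using partial_th[of U1 r1 y] partial_th[of U2 r1 y] C1 C2' inS[OF r1(1)]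
      by (auto intro!: derivative_eq_intros)
    show "(b' has_real_derivative L2) (at \<theta>1)"
      unfolding b'_def L2_def
      using partial_th[of "d_th U1" r1 \<theta>1] partial_th[of "d_th U2" r1 \<theta>1] C1 C2' inS[OF r1(1)]
      by (auto intro!: derivative_eq_intros)
  qed
  define c where "c = deriv w r1 / w r1"
  have wr1: "w r1 > 0" using F.wpos r1 by auto
  have l1: "d_r (d_r U1) (r1,\<theta>1) + c * d_r U1 (r1,\<theta>1) + d_th (d_th U1) (r1,\<theta>1) / (w r1)^2 = 0"
    using C1 inS[OF r1(1)] unfolding model_lap_def c_def by auto
  have l2: "d_r (d_r U2) (r1,\<theta>1) + c * d_r U2 (r1,\<theta>1) + d_th (d_th U2) (r1,\<theta>1) / (w r1)^2 = 0"
    using C2' inS[OF r1(1)] unfolding model_lap_def c_def by auto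
  have iF: "F.q2 r1 + c * F.q r1 = 0" using F.ident[OF r1(1)] by (simp add: c_def)
  have iG: "G.q2 r1 + c * G.q r1 = 1 / w r1" using G.ident[OF r1(1)] by (simp add: c_def)
  have "L + c * a' r1 + L2 / (w r1)^2 = - \<epsilon> * (F.q2 r1 + c * F.q r1) + \<delta> * (G.q2 r1 + c * G.q r1)"
    using l1 l2 unfolding L_def a'_def L2_def by (simp add: algebra_simps diff_divide_distrib)
  also have "\<dots> = \<delta> / w r1" using iF iG by simp
  finally have "L + c * a' r1 + L2 / (w r1)^2 > 0" using del wr1 by simp
  moreover have "L2 / (w r1)^2 \<le> 0" using tb wr1 by (simp add: divide_nonpos_nonneg)
  ultimately show False using ra by simp
qed



theorem corollary2p12:
  fixes w :: "real \<Rightarrow> real" and \<rho> :: real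
  assumes "model_profile w" and "\<rho> > 0"
  shows "(parabolic_model_end w \<rho> \<longleftrightarrow>
            (\<integral>\<^sup>+ t. ennreal (indicator {\<rho>..} t * (1 / w t)) \<partial>lborel) = \<infinity>)
       \<and> ((\<integral>\<^sup>+ t. ennreal (indicator {\<rho>..} t * (integral {0..t} w / w t)) \<partial>lborel) = \<infinity>
            \<longrightarrow> (\<exists>K v. compact K \<and> K \<subseteq> model_end \<rho> \<and>
                   one_superharmonic_off w \<rho> K v \<and>
                   tends_to_infinity_on (model_end \<rho> - K) v))"
proof -
  note mp = assms(1) and rpos = assms(2)
  interpret F: radial w \<rho> "\<lambda>_. 1" "\<lambda>_. 0" 0
    by unfold_locales (auto intro: mp rpos)
  interpret Z: radial w \<rho> "\<lambda>_. 0" "\<lambda>_. 0" 0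
    by unfold_locales (auto intro: mp rpos)
  have Fq: "F.q = (\<lambda>s. 1 / w s)" by (auto simp: F.q_def)
  have Fnn: "\<And>x. x \<ge> \<rho> \<Longrightarrow> 1 / w x \<ge> 0" using F.wpos by (simp add: less_imp_le)
  have divF: "(\<integral>\<^sup>+ t. ennreal (indicator {\<rho>..} t * (1 / w t)) \<partial>lborel) = \<infinity> \<longleftrightarrow>
      (\<forall>M. \<exists>R. M < integral {\<rho>..R} (\<lambda>s. 1 / w s))"
    by (rule nn_div) (use F.qc Fq Fnn in auto)
  have Zq: "Z.q = (\<lambda>r. 0)" by (rule ext) (simp add: Z.q_def)
  have ZH: "Z.H = (\<lambda>r. 0)" by (rule ext) (simp add: Z.H_def Zq)
  have pbfst: "pullback (\<lambda>p. g (fst p)) = (\<lambda>p. g (fst p))" for g :: "real \<Rightarrow> real"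
    by (auto simp: pullback_def)
  have harmF: "harmonic_coords w {(r, \<theta>). r > \<rho>} (pullback (\<lambda>p. F.H (fst p)))"
    unfolding harmonic_coords_def pbfst using F.C2 F.lap by auto
  have harmZ: "harmonic_coords w {(r, \<theta>). r > \<rho>} (pullback (\<lambda>p. 0))"
    using Z.C2 Z.lap unfolding harmonic_coords_def pbfst[of Z.H, unfolded ZH] ZH by auto
  have part1: "parabolic_model_end w \<rho> \<longleftrightarrow>
            (\<integral>\<^sup>+ t. ennreal (indicator {\<rho>..} t * (1 / w t)) \<partial>lborel) = \<infinity>"
  proof
    assume par: "parabolic_model_end w \<rho>"
    show "(\<integral>\<^sup>+ t. ennreal (indicator {\<rho>..} t * (1 / w t)) \<partial>lborel) = \<infinity>"
    proof (rule ccontr)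
      assume "\<not> ?thesis"
      then obtain M where M: "\<And>R. integral {\<rho>..R} (\<lambda>s. 1 / w s) \<le> M"
        using divF by (auto simp: not_less)
      have Hb: "\<bar>F.H r\<bar> \<le> M" for r
      proof -
        have "F.H r \<ge> 0" unfolding F.H_def using int_nonneg[OF F.qc] Fnn Fq by auto
        then show ?thesis using M[of r] by (simp add: F.H_def Fq)
      qed
      define u2 where "u2 = (\<lambda>p::real\<times>complex. F.H (fst p))"
      have bu2: "bounded (u2 ` model_end \<rho>)"
        unfolding bounded_iff u2_def using Hb by auto
      have cu2: "continuous_on (model_end \<rho>) u2"
        unfolding u2_def
        by (rule continuous_on_compose2[OF F.Hc]) (auto intro!: continuous_intros simp: model_end_def)
      have "F.H \<rho> < F.H (\<rho>+1)"
      proof (rule DERIV_pos_imp_increasing_open[of \<rho> "\<rho>+1" F.H])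
        show "\<exists>y. DERIV F.H x :> y \<and> 0 < y" if "\<rho> < x" "x < \<rho> + 1" for x
          using F.Hd[of x] F.wpos[of x] that by (auto simp: F.q_def)
        show "continuous_on {\<rho>..\<rho> + 1} F.H" by (rule continuous_on_subset[OF F.Hc]) auto
      qed simp
      then have neq: "u2 (\<rho>+1, 1) \<noteq> 0" by (simp add: u2_def F.H0)
      have b0: "bounded ((\<lambda>p::real\<times>complex. 0::real) ` model_end \<rho>)"
        unfolding bounded_iff by auto
      have imp: "\<And>v1 v2. bounded (v1 ` model_end \<rho>) \<and> bounded (v2 ` model_end \<rho>) \<and>
        continuous_on (model_end \<rho>) v1 \<and> continuous_on (model_end \<rho>) v2 \<and>
        harmonic_coords w {(r, \<theta>). r > \<rho>} (pullback v1) \<and>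
        harmonic_coords w {(r, \<theta>). r > \<rho>} (pullback v2) \<and>
        (\<forall>z. cmod z = 1 \<longrightarrow> v1 (\<rho>, z) = v2 (\<rho>, z)) \<Longrightarrow> (\<forall>x\<in>model_end \<rho>. v1 x = v2 x)"
        using par unfolding parabolic_model_end_def by blast
      have bnd: "\<forall>z. cmod z = 1 \<longrightarrow> (\<lambda>p::real\<times>complex. 0::real) (\<rho>, z) = u2 (\<rho>, z)"
        by (simp add: u2_def F.H0)
      have c0: "continuous_on (model_end \<rho>) (\<lambda>p::real\<times>complex. 0::real)" by simp
      have "\<forall>x\<in>model_end \<rho>. (\<lambda>p::real\<times>complex. 0::real) x = u2 x"
        by (rule imp[OF conjI[OF b0 conjI[OF bu2 conjI[OF c0 conjI[OF cu2 conjI[OF harmZ conjI[OF _ bnd]]]]]]])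
           (simp add: u2_def harmF)
      moreover have "(\<rho>+1, 1) \<in> model_end \<rho>" by (simp add: model_end_def)
      ultimately show False using neq by force
    qed
  next
    assume "(\<integral>\<^sup>+ t. ennreal (indicator {\<rho>..} t * (1 / w t)) \<partial>lborel) = \<infinity>"
    then have dv: "\<forall>M. \<exists>R. M < integral {\<rho>..R} (\<lambda>s. 1 / w s)" using divF by simp
    show "parabolic_model_end w \<rho>"
      unfolding parabolic_model_end_def
    proof (intro allI impI ballI)
      fix u1 u2 :: "real \<times> complex \<Rightarrow> real" and x
      assume H: "bounded (u1 ` model_end \<rho>) \<and> bounded (u2 ` model_end \<rho>) \<and>
        continuous_on (model_end \<rho>) u1 \<and> continuous_on (model_end \<rho>) u2 \<and>
        harmonic_coords w {(r, \<theta>). r > \<rho>} (pullback u1) \<and>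
        harmonic_coords w {(r, \<theta>). r > \<rho>} (pullback u2) \<and>
        (\<forall>z. cmod z = 1 \<longrightarrow> u1 (\<rho>, z) = u2 (\<rho>, z))"
        and x: "x \<in> model_end \<rho>"
      obtain r z where xe: "x = (r,z)" "r \<ge> \<rho>" "cmod z = 1" using x by (auto simp: model_end_def)
      show "u1 x = u2 x"
      proof (cases "r = \<rho>")
        case True then show ?thesis using H xe by auto
      next
        case False
        then have r: "r > \<rho>" using xe by auto
        have "z \<noteq> 0" using xe(3) by auto
        then have z: "cis (Arg z) = z" using xe(3) by (simp add: cis_Arg sgn_div_norm)
        have "pullback u1 (r, Arg z) \<le> pullback u2 (r, Arg z)"
          by (rule max_principle[OF mp rpos dv]) (use H r in auto)
        moreover have "pullback u2 (r, Arg z) \<le> pullback u1 (r, Arg z)"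
          by (rule max_principle[OF mp rpos dv]) (use H r in auto)
        ultimately show ?thesis using z xe by (simp add: pullback_def)
      qed
    qed
  qed
  define I where "I s = integral {0..s} w" for s
  have wc: "continuous_on A w" for A using mp_w_deriv(5)[OF mp] .
  have Ic: "continuous_on {\<rho>..} I"
    unfolding I_def by (rule continuous_on_subset[OF int_cont[OF wc]]) (use rpos in auto)
  interpret P: radial w \<rho> I w 1
  proof unfold_locales
    show "(I has_real_derivative w s) (at s)" if "s > \<rho>" for s
      unfolding I_def by (rule int_deriv[OF wc]) (use that rpos in auto)
  qed (auto intro: mp rpos Ic wc)
  have Inn: "I s \<ge> 0" for s
    unfolding I_def by (rule int_nonneg[OF wc]) (use mp_w_deriv(4)[OF mp] in auto)
  have Pq: "P.q = (\<lambda>t. integral {0..t} w / w t)" by (auto simp: P.q_def I_def)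
  have Pqnn: "\<And>x. x \<ge> \<rho> \<Longrightarrow> P.q x \<ge> 0" using P.wpos Inn by (simp add: P.q_def less_imp_le)
  have divP: "(\<integral>\<^sup>+ t. ennreal (indicator {\<rho>..} t * (integral {0..t} w / w t)) \<partial>lborel) = \<infinity> \<longleftrightarrow>
      (\<forall>M. \<exists>R. M < integral {\<rho>..R} P.q)"
    using nn_div[OF P.qc Pqnn] unfolding Pq .
  have Pge: "P.H r \<ge> 1" for r unfolding P.H_def using int_nonneg[OF P.qc Pqnn] by auto
  have part2: "\<exists>K v. compact K \<and> K \<subseteq> model_end \<rho> \<and>
                   one_superharmonic_off w \<rho> K v \<and>
                   tends_to_infinity_on (model_end \<rho> - K) v"
    if dv: "\<forall>M. \<exists>R. M < integral {\<rho>..R} P.q"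
  proof (intro exI conjI)
    let ?v = "\<lambda>p::real\<times>complex. P.H (fst p)"
    show "compact ({}::(real\<times>complex) set)" by simp
    show "{} \<subseteq> model_end \<rho>" by simp
    have S: "{(r, \<theta>). r > \<rho> \<and> (r, cis \<theta>) \<notin> ({}::(real\<times>complex) set)} = {(r, \<theta>). r > \<rho>}"
      by auto
    show "one_superharmonic_off w \<rho> {} ?v"
      unfolding one_superharmonic_off_def S pbfst
    proof (intro conjI ballI)
      show "continuous_on (model_end \<rho> - {}) ?v"
        by (rule continuous_on_compose2[OF P.Hc]) (auto intro!: continuous_intros simp: model_end_def)
      show "C2_on {(r, \<theta>). r > \<rho>} (\<lambda>p. P.H (fst p))" by (rule P.C2)
      fix p :: "real \<times> real" assume p: "p \<in> {(r, \<theta>). r > \<rho>}"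
      obtain r \<theta> where pe: "p = (r,\<theta>)" "r > \<rho>" using p by auto
      have "model_lap w (\<lambda>p. P.H (fst p)) p = 1" using P.lap[OF pe(2)] P.wpos[of r] pe by simp
      then show "0 \<le> - model_lap w (\<lambda>p. P.H (fst p)) p + P.H (fst p)" using Pge[of "fst p"] by simp
    qed
    show "tends_to_infinity_on (model_end \<rho> - {}) ?v"
      unfolding tends_to_infinity_on_def
    proof
      fix M
      obtain R where R: "M < integral {\<rho>..R} P.q" using dv by blast
      show "\<exists>C. compact C \<and> (\<forall>x\<in>model_end \<rho> - {} - C. M \<le> ?v x)"
      proof (intro exI conjI ballI)
        show "compact ({\<rho>..R} \<times> sphere (0::complex) 1)" by (intro compact_Times compact_Icc compact_sphere)
        fix x assume x: "x \<in> model_end \<rho> - {} - {\<rho>..R} \<times> sphere 0 1"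
        obtain r z where xe0: "x = (r,z)" by (cases x)
        have xe: "x = (r,z)" "r > R" using x xe0 by (auto simp: model_end_def not_le)
        have "integral {\<rho>..R} P.q \<le> integral {\<rho>..r} P.q"
          by (rule int_mono[OF P.qc Pqnn]) (use xe in auto)
        then show "M \<le> ?v x" using R xe by (simp add: P.H_def)
      qed
    qed
  qed
  show ?thesis using part1 part2 divP by blast
qed

end
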